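(* Let $s\in I(\Phi)$ and let $C$ be an S-chamber for $s$. Then for every $\alpha\in\mathcal B^s_\star(C)$ there is a unique $\alpha'\in\mathcal B(C)$ such that $s(\alpha)-\alpha'\in\mathbb Z[\mathcal B^s_\bullet(C)]$. Moreover $\alpha''=s(\alpha)-\alpha'$ lies in $\mathbb Z^+[\mathcal B^s_\bullet(C)]$ and is the unique element of maximal height among the elements $\gamma\in\mathbb Z^+[\mathcal B^s_\bullet(C)]$ for which $\alpha+\gamma\in\Phi$.
   Context: $\Phi$ is a reduced crystallographic root system spanning a real Euclidean space $V$; $I(\Phi)$ is the set of orthogonal involutions of $V$ preserving $\Phi$. For $s\in I(\Phi)$: $\Phi^s_\bullet=\{\alpha:s\alpha=-\alpha\}$, $\Phi^s_\circ=\{\alpha:s\alpha=\alpha\}$, $\Phi^s_\star=\Phi\setminus(\Phi^s_\circ\cup\Phi^s_\bullet)$. For a Weyl chamber $C$ with positive roots $\Phi^+(C)$ and simple roots $\mathcal B(C)$, set $\mathcal B^s_\bullet(C)=\mathcal B(C)\cap\Phi^s_\bullet$, $\mathcal B^s_\star(C)=\mathcal B(C)\cap\Phi^s_\star$. $C$ is an S-chamber for $s$ if $s(\Phi^+(C)\cap\Phi^s_\star)\subseteq\Phi^+(C)$. For $S\subseteq V$, $\mathbb Z[S]$ ($\mathbb Z^+[S]$) is the set of integer (nonnegative integer) combinations of elements of $S$. The height of $\xi=\sum_{\beta\in\mathcal B(C)}k_\beta\beta$ is $\sum_\beta k_\beta$. *)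

theory Defs
  imports "HOL-Analysis.Analysis"
begin

definition root_system :: "'a::euclidean_space set \<Rightarrow> bool" where
  "root_system \<Phi> \<longleftrightarrow> finite \<Phi> \<and> 0 \<notin> \<Phi> \<and> span \<Phi> = UNIV \<and>
     (\<forall>\<alpha>\<in>\<Phi>. \<forall>\<beta>\<in>\<Phi>. \<beta> - (2 * (\<beta> \<bullet> \<alpha>) / (\<alpha> \<bullet> \<alpha>)) *\<^sub>R \<alpha> \<in> \<Phi>) \<and>
     (\<forall>\<alpha>\<in>\<Phi>. \<forall>\<beta>\<in>\<Phi>. 2 * (\<beta> \<bullet> \<alpha>) / (\<alpha> \<bullet> \<alpha>) \<in> \<int>) \<and>
     (\<forall>\<alpha>\<in>\<Phi>. \<forall>c::real. c *\<^sub>R \<alpha> \<in> \<Phi> \<longrightarrow> c = 1 \<or> c = -1)"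

definition invols :: "'a::euclidean_space set \<Rightarrow> ('a \<Rightarrow> 'a) set" where
  "invols \<Phi> = {s. orthogonal_transformation s \<and> (\<forall>x. s (s x) = x) \<and> s ` \<Phi> = \<Phi>}"

definition Phi_bullet :: "'a::euclidean_space set \<Rightarrow> ('a \<Rightarrow> 'a) \<Rightarrow> 'a set" where
  "Phi_bullet \<Phi> s = {\<alpha>\<in>\<Phi>. s \<alpha> = - \<alpha>}"

definition Phi_circ :: "'a::euclidean_space set \<Rightarrow> ('a \<Rightarrow> 'a) \<Rightarrow> 'a set" where
  "Phi_circ \<Phi> s = {\<alpha>\<in>\<Phi>. s \<alpha> = \<alpha>}"

definition Phi_star :: "'a::euclidean_space set \<Rightarrow> ('a \<Rightarrow> 'a) \<Rightarrow> 'a set" where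
  "Phi_star \<Phi> s = \<Phi> - (Phi_circ \<Phi> s \<union> Phi_bullet \<Phi> s)"

definition regular_set :: "'a::euclidean_space set \<Rightarrow> 'a set" where
  "regular_set \<Phi> = UNIV - (\<Union>\<alpha>\<in>\<Phi>. {x. \<alpha> \<bullet> x = 0})"

definition weyl_chamber :: "'a::euclidean_space set \<Rightarrow> 'a set \<Rightarrow> bool" where
  "weyl_chamber \<Phi> C \<longleftrightarrow>
     (\<exists>v\<in>regular_set \<Phi>. C = connected_component_set (regular_set \<Phi>) v)"

definition pos_roots :: "'a::euclidean_space set \<Rightarrow> 'a set \<Rightarrow> 'a set" where
  "pos_roots \<Phi> C = {\<alpha>\<in>\<Phi>. \<forall>x\<in>C. \<alpha> \<bullet> x > 0}"

definition simple_roots :: "'a::euclidean_space set \<Rightarrow> 'a set \<Rightarrow> 'a set" where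
  "simple_roots \<Phi> C = {\<alpha>\<in>pos_roots \<Phi> C.
     \<not> (\<exists>\<beta>\<in>pos_roots \<Phi> C. \<exists>\<gamma>\<in>pos_roots \<Phi> C. \<alpha> = \<beta> + \<gamma>)}"

definition B_bullet :: "'a::euclidean_space set \<Rightarrow> ('a \<Rightarrow> 'a) \<Rightarrow> 'a set \<Rightarrow> 'a set" where
  "B_bullet \<Phi> s C = simple_roots \<Phi> C \<inter> Phi_bullet \<Phi> s"

definition B_star :: "'a::euclidean_space set \<Rightarrow> ('a \<Rightarrow> 'a) \<Rightarrow> 'a set \<Rightarrow> 'a set" where
  "B_star \<Phi> s C = simple_roots \<Phi> C \<inter> Phi_star \<Phi> s"

definition S_chamber :: "'a::euclidean_space set \<Rightarrow> ('a \<Rightarrow> 'a) \<Rightarrow> 'a set \<Rightarrow> bool" where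
  "S_chamber \<Phi> s C \<longleftrightarrow> s ` (pos_roots \<Phi> C \<inter> Phi_star \<Phi> s) \<subseteq> pos_roots \<Phi> C"

definition int_comb :: "'a::real_vector set \<Rightarrow> 'a set" where
  "int_comb S = {x. \<exists>T c. finite T \<and> T \<subseteq> S \<and> x = (\<Sum>\<beta>\<in>T. real_of_int (c \<beta>) *\<^sub>R \<beta>)}"

definition nonneg_int_comb :: "'a::real_vector set \<Rightarrow> 'a set" where
  "nonneg_int_comb S = {x. \<exists>T c. finite T \<and> T \<subseteq> S \<and> x = (\<Sum>\<beta>\<in>T. real (c \<beta> :: nat) *\<^sub>R \<beta>)}"

definition height :: "'a::euclidean_space set \<Rightarrow> 'a set \<Rightarrow> 'a \<Rightarrow> real" where
  "height \<Phi> C \<xi> = (\<Sum>\<beta>\<in>simple_roots \<Phi> C. representation (simple_roots \<Phi> C) \<xi> \<beta>)"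

end

theory Submission
  imports Defs
begin

locale RS =
  fixes \<Phi> :: "'a::euclidean_space set" and v :: 'a
  assumes rs: "root_system \<Phi>" and reg: "\<And>\<alpha>. \<alpha> \<in> \<Phi> \<Longrightarrow> \<alpha> \<bullet> v \<noteq> 0"
begin

definition "P = {\<alpha>\<in>\<Phi>. \<alpha> \<bullet> v > 0}"
definition "Bs = {\<alpha>\<in>P. \<not> (\<exists>\<beta>\<in>P. \<exists>\<gamma>\<in>P. \<alpha> = \<beta> + \<gamma>)}"

lemma fin: "finite \<Phi>" and nz: "0 \<notin> \<Phi>" and spanU: "span \<Phi> = UNIV"
  and refl: "\<And>\<alpha> \<beta>. \<alpha>\<in>\<Phi> \<Longrightarrow> \<beta>\<in>\<Phi> \<Longrightarrow> \<beta> - (2 * (\<beta> \<bullet> \<alpha>) / (\<alpha> \<bullet> \<alpha>)) *\<^sub>R \<alpha> \<in> \<Phi>"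
  and cint: "\<And>\<alpha> \<beta>. \<alpha>\<in>\<Phi> \<Longrightarrow> \<beta>\<in>\<Phi> \<Longrightarrow> 2 * (\<beta> \<bullet> \<alpha>) / (\<alpha> \<bullet> \<alpha>) \<in> \<int>"
  and red: "\<And>\<alpha> c. \<alpha>\<in>\<Phi> \<Longrightarrow> c *\<^sub>R \<alpha> \<in> \<Phi> \<Longrightarrow> c = 1 \<or> c = -1"
  using rs unfolding root_system_def by auto

lemma negr: assumes "\<alpha> \<in> \<Phi>" shows "-\<alpha> \<in> \<Phi>"
proof -
  have "\<alpha> \<noteq> 0" using nz assms by auto
  hence "\<alpha> \<bullet> \<alpha> \<noteq> 0" by simp
  hence "\<alpha> - (2 * (\<alpha> \<bullet> \<alpha>) / (\<alpha> \<bullet> \<alpha>)) *\<^sub>R \<alpha> = -\<alpha>" by (simp add: algebra_simps scaleR_2)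
  thus ?thesis using refl[OF assms assms] by simp
qed

lemma PorN: "\<alpha> \<in> \<Phi> \<Longrightarrow> \<alpha> \<in> P \<or> -\<alpha> \<in> P"
  using reg[of \<alpha>] negr[of \<alpha>] unfolding P_def by (auto simp: inner_minus_left)

lemma P_sub: "P \<subseteq> \<Phi>" and Bs_sub: "Bs \<subseteq> P" unfolding P_def Bs_def by auto
lemma finB: "finite Bs" by (rule finite_subset[OF subset_trans[OF Bs_sub P_sub] fin])

lemma diff_root:
  assumes b: "\<beta> \<in> \<Phi>" and g: "\<gamma> \<in> \<Phi>" and pos: "\<beta> \<bullet> \<gamma> > 0" and ne: "\<beta> \<noteq> \<gamma>"
  shows "\<beta> - \<gamma> \<in> \<Phi>"
proof -
  have bn: "\<beta> \<noteq> 0" "\<gamma> \<noteq> 0" using nz b g by auto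
  have lt: "\<beta> \<bullet> \<gamma> < norm \<beta> * norm \<gamma>"
  proof -
    have le: "\<beta> \<bullet> \<gamma> \<le> norm \<beta> * norm \<gamma>" by (rule norm_cauchy_schwarz)
    have "\<beta> \<bullet> \<gamma> \<noteq> norm \<beta> * norm \<gamma>"
    proof
      assume "\<beta> \<bullet> \<gamma> = norm \<beta> * norm \<gamma>"
      hence e: "norm \<beta> *\<^sub>R \<gamma> = norm \<gamma> *\<^sub>R \<beta>" by (simp add: norm_cauchy_schwarz_eq)
      have "(norm \<beta> / norm \<gamma>) *\<^sub>R \<gamma> = \<beta>" using e bn
        by (metis divide_inverse_commute norm_eq_zero scaleR_scaleR scaleR_one right_inverse mult.commute)
      hence "(norm \<beta> / norm \<gamma>) *\<^sub>R \<gamma> \<in> \<Phi>" using b by simp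
      from red[OF g this] have r1: "norm \<beta> / norm \<gamma> = 1" using bn
        by (smt (verit) divide_nonneg_nonneg norm_ge_zero)
      hence "\<beta> = \<gamma>" using \<open>(norm \<beta> / norm \<gamma>) *\<^sub>R \<gamma> = \<beta>\<close>[unfolded r1] by simp
      with ne show False by simp
    qed
    with le show ?thesis by simp
  qed
  define n where "n = 2 * (\<beta> \<bullet> \<gamma>) / (\<gamma> \<bullet> \<gamma>)"
  define m where "m = 2 * (\<gamma> \<bullet> \<beta>) / (\<beta> \<bullet> \<beta>)"
  have gg: "\<gamma> \<bullet> \<gamma> > 0" "\<beta> \<bullet> \<beta> > 0" using bn by auto
  have npos: "n > 0" "m > 0" using pos gg unfolding n_def m_def by (auto simp: inner_commute)
  have "(\<beta> \<bullet> \<gamma>) * (\<beta> \<bullet> \<gamma>) < (norm \<beta> * norm \<gamma>) * (norm \<beta> * norm \<gamma>)"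
    using lt pos by (intro mult_strict_mono) auto
  also have "\<dots> = (\<beta> \<bullet> \<beta>) * (\<gamma> \<bullet> \<gamma>)" by (simp add: dot_square_norm power2_eq_square)
  finally have sq: "(\<beta> \<bullet> \<gamma>) * (\<beta> \<bullet> \<gamma>) < (\<beta> \<bullet> \<beta>) * (\<gamma> \<bullet> \<gamma>)" .
  have "n * m = 4 * ((\<beta> \<bullet> \<gamma>) * (\<beta> \<bullet> \<gamma>)) / ((\<beta> \<bullet> \<beta>) * (\<gamma> \<bullet> \<gamma>))"
    unfolding n_def m_def by (simp add: inner_commute field_simps)
  also have "\<dots> < 4" using sq gg by (simp add: divide_less_eq)
  finally have nm: "n * m < 4" .
  obtain ni where ni: "n = of_int ni" using cint[OF g b] unfolding n_def by (auto elim: Ints_cases)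
  obtain mi where mi: "m = of_int mi" using cint[OF b g] unfolding m_def by (auto elim: Ints_cases)
  have "ni > 0" "mi > 0" using npos ni mi by auto
  moreover have "ni * mi < 4" using nm ni mi by (metis of_int_less_iff of_int_mult of_int_numeral)
  ultimately have "ni = 1 \<or> mi = 1"
  proof -
    assume a: "ni > 0" "mi > 0" "ni * mi < 4"
    show ?thesis
    proof (rule ccontr)
      assume "\<not> ?thesis"
      hence "ni \<ge> 2" "mi \<ge> 2" using a by auto
      hence "ni * mi \<ge> 2 * 2" by (intro mult_mono) auto
      with a show False by simp
    qed
  qed
  thus ?thesis
  proof
    assume "ni = 1" hence "n = 1" using ni by simp
    moreover have "\<beta> - n *\<^sub>R \<gamma> \<in> \<Phi>" using refl[OF g b] unfolding n_def .
    ultimately show ?thesis by simp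
  next
    assume "mi = 1" hence "m = 1" using mi by simp
    moreover have "\<gamma> - m *\<^sub>R \<beta> \<in> \<Phi>" using refl[OF b g] unfolding m_def .
    ultimately have "\<gamma> - \<beta> \<in> \<Phi>" by simp
    from negr[OF this] show ?thesis by simp
  qed
qed


lemma pos_comb: "\<alpha> \<in> P \<Longrightarrow> \<exists>c::'a\<Rightarrow>nat. \<alpha> = (\<Sum>\<beta>\<in>Bs. real (c \<beta>) *\<^sub>R \<beta>)"
proof (induction "card {\<beta>\<in>P. \<beta> \<bullet> v < \<alpha> \<bullet> v}" arbitrary: \<alpha> rule: less_induct)
  case (less \<alpha>)
  show ?case
  proof (cases "\<alpha> \<in> Bs")
    case True
    show ?thesis
      by (rule exI[of _ "\<lambda>\<beta>. if \<beta> = \<alpha> then 1 else 0"])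
         (simp add: if_distrib[of real] if_distrib[of "\<lambda>x. x *\<^sub>R _"] sum.delta[OF finB] True cong: if_cong)
  next
    case False
    then obtain \<beta> \<gamma> where bg: "\<beta> \<in> P" "\<gamma> \<in> P" "\<alpha> = \<beta> + \<gamma>" using less.prems unfolding Bs_def by auto
    have pv: "\<beta> \<bullet> v > 0" "\<gamma> \<bullet> v > 0" using bg unfolding P_def by auto
    have finP: "finite P" by (rule finite_subset[OF P_sub fin])
    have lt: "card {\<delta>\<in>P. \<delta> \<bullet> v < \<eta> \<bullet> v} < card {\<delta>\<in>P. \<delta> \<bullet> v < \<alpha> \<bullet> v}"
      if "\<eta> \<in> P" "\<eta> \<bullet> v < \<alpha> \<bullet> v" for \<eta>
      by (rule psubset_card_mono) (use finP that in auto)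
    have "\<beta> \<bullet> v < \<alpha> \<bullet> v" "\<gamma> \<bullet> v < \<alpha> \<bullet> v" using pv bg(3) by (auto simp: inner_add_left)
    from less.hyps[OF lt[OF bg(1) this(1)] bg(1)] less.hyps[OF lt[OF bg(2) this(2)] bg(2)]
    obtain c1 c2 :: "'a \<Rightarrow> nat" where "\<beta> = (\<Sum>\<beta>\<in>Bs. real (c1 \<beta>) *\<^sub>R \<beta>)" "\<gamma> = (\<Sum>\<beta>\<in>Bs. real (c2 \<beta>) *\<^sub>R \<beta>)"
      by blast
    hence "\<alpha> = (\<Sum>\<delta>\<in>Bs. real (c1 \<delta> + c2 \<delta>) *\<^sub>R \<delta>)"
      using bg(3) by (simp add: sum.distrib scaleR_add_left)
    thus ?thesis by (rule exI[of _ "\<lambda>\<delta>. c1 \<delta> + c2 \<delta>"])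
  qed
qed

lemma simple_obtuse:
  assumes b: "\<beta> \<in> Bs" and g: "\<gamma> \<in> Bs" and ne: "\<beta> \<noteq> \<gamma>"
  shows "\<beta> \<bullet> \<gamma> \<le> 0"
proof (rule ccontr)
  assume A: "\<not> \<beta> \<bullet> \<gamma> \<le> 0"
  have "\<beta> \<in> \<Phi>" "\<gamma> \<in> \<Phi>" using b g P_sub Bs_sub by auto
  hence "\<beta> - \<gamma> \<in> \<Phi>" using diff_root ne A by simp
  from PorN[OF this] show False
  proof
    assume "\<beta> - \<gamma> \<in> P"
    moreover have "\<beta> = \<gamma> + (\<beta> - \<gamma>)" by simp
    ultimately show False using b g unfolding Bs_def by blast
  next
    assume "-(\<beta> - \<gamma>) \<in> P"
    moreover have "\<gamma> = \<beta> + (-(\<beta> - \<gamma>))" by simp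
    ultimately show False using b g unfolding Bs_def by blast
  qed
qed

end

lemma obtuse_indep:
  fixes S :: "'a::euclidean_space set"
  assumes fS: "finite S" and pos: "\<And>x. x \<in> S \<Longrightarrow> x \<bullet> w > 0"
    and obt: "\<And>x y. x \<in> S \<Longrightarrow> y \<in> S \<Longrightarrow> x \<noteq> y \<Longrightarrow> x \<bullet> y \<le> 0"
  shows "independent S"
proof -
  have main: "\<forall>x\<in>S. u x = 0" if sum0: "(\<Sum>x\<in>S. u x *\<^sub>R x) = 0" for u
  proof -
    define Sp where "Sp = {x\<in>S. u x > 0}"
    define Sn where "Sn = {x\<in>S. u x < 0}"
    have fin: "finite Sp" "finite Sn" unfolding Sp_def Sn_def by (rule finite_subset[OF _ fS], blast)+
    have "(\<Sum>x\<in>S. u x *\<^sub>R x) = (\<Sum>x\<in>Sp \<union> Sn. u x *\<^sub>R x)"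
      by (rule sum.mono_neutral_right) (auto simp: fS Sp_def Sn_def)
    also have "\<dots> = (\<Sum>x\<in>Sp. u x *\<^sub>R x) + (\<Sum>x\<in>Sn. u x *\<^sub>R x)"
      by (rule sum.union_disjoint[OF fin]) (auto simp: Sp_def Sn_def)
    finally have e: "(\<Sum>x\<in>Sp. u x *\<^sub>R x) = (\<Sum>x\<in>Sn. (- u x) *\<^sub>R x)"
      using sum0 by (simp add: sum_negf eq_neg_iff_add_eq_0)
    define \<epsilon> where "\<epsilon> = (\<Sum>x\<in>Sp. u x *\<^sub>R x)"
    have "\<epsilon> \<bullet> \<epsilon> = (\<Sum>x\<in>Sp. u x *\<^sub>R x) \<bullet> (\<Sum>y\<in>Sn. (- u y) *\<^sub>R y)"
      using e unfolding \<epsilon>_def by simp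
    also have "\<dots> = (\<Sum>x\<in>Sp. (u x *\<^sub>R x) \<bullet> (\<Sum>y\<in>Sn. (- u y) *\<^sub>R y))"
      by (rule inner_sum_left)
    also have "\<dots> = (\<Sum>x\<in>Sp. \<Sum>y\<in>Sn. (u x * (- u y)) * (x \<bullet> y))"
      by (simp add: inner_sum_right mult.assoc mult.left_commute)
    also have "\<dots> \<le> 0"
    proof (intro sum_nonpos)
      fix x y assume "x \<in> Sp" "y \<in> Sn"
      hence xy: "x \<in> S" "y \<in> S" "u x > 0" "u y < 0" unfolding Sp_def Sn_def by auto
      hence "x \<noteq> y" by auto
      hence h1: "x \<bullet> y \<le> 0" using obt xy by auto
      have h2: "u x * (- u y) \<ge> 0" using mult_pos_neg[OF xy(3) xy(4)] by simp
      show "(u x * (- u y)) * (x \<bullet> y) \<le> 0" by (rule mult_nonneg_nonpos[OF h2 h1])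
    qed
    finally have "\<epsilon> \<bullet> \<epsilon> \<le> 0" .
    hence "\<epsilon> \<bullet> \<epsilon> = 0" using inner_ge_zero[of \<epsilon>] by linarith
    hence "\<epsilon> = 0" by simp
    have ew: "\<epsilon> \<bullet> w = 0" using \<open>\<epsilon> = 0\<close> by simp
    have z1: "(\<Sum>x\<in>Sp. u x * (x \<bullet> w)) = 0" using ew unfolding \<epsilon>_def by (simp add: inner_sum_left)
    have z2: "(\<Sum>x\<in>Sn. (- u x) * (x \<bullet> w)) = 0" using ew unfolding \<epsilon>_def e
      by (simp only: inner_sum_left inner_scaleR_left)
    have "Sp = {}"
    proof (rule ccontr)
      assume ne: "Sp \<noteq> {}"
      have "0 < u x * (x \<bullet> w)" if "x \<in> Sp" for x
        using that pos unfolding Sp_def by (intro mult_pos_pos) auto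
      hence "(\<Sum>x\<in>Sp. u x * (x \<bullet> w)) > 0" by (intro sum_pos[OF fin(1) ne])
      with z1 show False by simp
    qed
    moreover have "Sn = {}"
    proof (rule ccontr)
      assume ne: "Sn \<noteq> {}"
      have "0 < (- u x) * (x \<bullet> w)" if "x \<in> Sn" for x
        using that pos unfolding Sn_def by (intro mult_pos_pos) auto
      hence "(\<Sum>x\<in>Sn. (- u x) * (x \<bullet> w)) > 0" by (intro sum_pos[OF fin(2) ne])
      with z2 show False by simp
    qed
    ultimately show ?thesis
    proof (intro ballI)
      fix x assume "Sp = {}" "Sn = {}" "x \<in> S"
      hence "\<not> u x > 0" "\<not> u x < 0" unfolding Sp_def Sn_def by blast+
      thus "u x = 0" by linarith
    qed
  qed
  show ?thesis using main by (auto simp: dependent_finite[OF fS])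
qed

context RS begin

lemma indepB: "independent Bs"
  by (rule obtuse_indep[where w=v]) (use finB simple_obtuse Bs_sub in \<open>auto simp: P_def\<close>)

lemma spanB: "span Bs = UNIV"
proof -
  have "\<Phi> \<subseteq> span Bs"
  proof
    fix \<alpha> assume "\<alpha> \<in> \<Phi>"
    have "x \<in> span Bs" if "x \<in> P" for x
    proof -
      from pos_comb[OF that] obtain c where "x = (\<Sum>\<beta>\<in>Bs. real (c \<beta>) *\<^sub>R \<beta>)" by blast
      thus ?thesis by (simp add: span_sum span_scale span_base)
    qed
    with PorN[OF \<open>\<alpha> \<in> \<Phi>\<close>] show "\<alpha> \<in> span Bs" by (metis minus_minus span_neg)
  qed
  hence "span \<Phi> \<subseteq> span Bs" by (simp add: span_minimal)
  thus ?thesis using spanU by auto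
qed

lemma rep_comb:
  assumes "T \<subseteq> Bs"
  shows "representation Bs (\<Sum>\<beta>\<in>T. c \<beta> *\<^sub>R \<beta>) \<gamma> = (if \<gamma> \<in> T then c \<gamma> else 0)"
proof -
  have fT: "finite T" by (rule finite_subset[OF assms finB])
  have "representation Bs (\<Sum>\<beta>\<in>T. c \<beta> *\<^sub>R \<beta>) \<gamma> = (\<Sum>\<beta>\<in>T. representation Bs (c \<beta> *\<^sub>R \<beta>) \<gamma>)"
    by (simp add: representation_sum[OF indepB] spanB)
  also have "\<dots> = (\<Sum>\<beta>\<in>T. c \<beta> * (if \<gamma> = \<beta> then 1 else 0))"
    using assms by (intro sum.cong refl) (auto simp: representation_scale[OF indepB] spanB representation_basis[OF indepB])
  also have "\<dots> = (if \<gamma> \<in> T then c \<gamma> else 0)"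
    by (simp add: if_distrib[of "\<lambda>x. _ * x"] sum.delta'[OF fT] cong: if_cong)
  finally show ?thesis .
qed

lemma rep_pos: assumes "y \<in> P" shows "\<exists>c::'a\<Rightarrow>nat. \<forall>\<beta>. representation Bs y \<beta> = real (c \<beta>)"
proof -
  from pos_comb[OF assms] obtain c where y: "y = (\<Sum>\<beta>\<in>Bs. real (c \<beta>) *\<^sub>R \<beta>)" by blast
  show ?thesis
    by (rule exI[of _ "\<lambda>\<beta>. if \<beta> \<in> Bs then c \<beta> else 0"]) (simp add: y rep_comb)
qed

lemma rep_pos_ge: "y \<in> P \<Longrightarrow> representation Bs y \<beta> \<ge> 0"
  using rep_pos by (metis of_nat_0_le_iff)

lemma rep_posI: assumes "y \<in> \<Phi>" "representation Bs y \<beta> > 0" shows "y \<in> P"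
proof (rule ccontr)
  assume "y \<notin> P"
  hence "-y \<in> P" using PorN assms by auto
  hence "representation Bs (-y) \<beta> \<ge> 0" by (rule rep_pos_ge)
  thus False using assms by (simp add: representation_neg[OF indepB] spanB)
qed

lemma rep_sum: "(\<Sum>\<beta>\<in>Bs. representation Bs y \<beta> *\<^sub>R \<beta>) = y"
  by (rule sum_representation_eq) (auto simp: indepB spanB finB)

lemma rep_lin: "representation Bs (x + y) \<beta> = representation Bs x \<beta> + representation Bs y \<beta>"
  "representation Bs (x - y) \<beta> = representation Bs x \<beta> - representation Bs y \<beta>"
  "representation Bs (-x) \<beta> = - representation Bs x \<beta>"
  "representation Bs (c *\<^sub>R x) \<beta> = c * representation Bs x \<beta>"
  by (simp_all add: representation_add representation_diff representation_neg representation_scale indepB spanB)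

lemma rep_basis: "\<gamma> \<in> Bs \<Longrightarrow> representation Bs \<gamma> \<beta> = (if \<beta> = \<gamma> then 1 else 0)"
  by (simp add: representation_basis indepB)

lemma rep_inj: "(\<And>\<beta>. \<beta> \<in> Bs \<Longrightarrow> representation Bs x \<beta> = representation Bs y \<beta>) \<Longrightarrow> x = y"
  by (metis (no_types, lifting) rep_sum sum.cong)

end

lemma (in RS) rep_sumI: "representation Bs (\<Sum>i\<in>I. f i) \<beta> = (\<Sum>i\<in>I. representation Bs (f i) \<beta>)"
  by (simp add: representation_sum[OF indepB] spanB)

lemma chamber_pos:
  fixes \<Phi> :: "'a::euclidean_space set"
  assumes "weyl_chamber \<Phi> C"
  obtains v where "\<And>\<alpha>. \<alpha>\<in>\<Phi> \<Longrightarrow> \<alpha> \<bullet> v \<noteq> 0" "pos_roots \<Phi> C = {\<alpha>\<in>\<Phi>. \<alpha> \<bullet> v > 0}"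
proof -
  obtain v where v: "v \<in> regular_set \<Phi>" and C: "C = connected_component_set (regular_set \<Phi>) v"
    using assms unfolding weyl_chamber_def by blast
  have vC: "v \<in> C" unfolding C using v by (simp add: connected_component_refl_eq)
  have conn: "connected C" unfolding C by (rule connected_connected_component)
  have sub: "C \<subseteq> regular_set \<Phi>" unfolding C by (rule connected_component_subset)
  have nz: "\<alpha> \<bullet> v \<noteq> 0" if "\<alpha> \<in> \<Phi>" for \<alpha> using v that unfolding regular_set_def by auto
  have "pos_roots \<Phi> C = {\<alpha>\<in>\<Phi>. \<alpha> \<bullet> v > 0}"
  proof (safe)
    fix \<alpha> assume "\<alpha> \<in> pos_roots \<Phi> C" thus "\<alpha> \<in> \<Phi>" "\<alpha> \<bullet> v > 0" using vC unfolding pos_roots_def by auto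
  next
    fix \<alpha> assume a: "\<alpha> \<in> \<Phi>" "\<alpha> \<bullet> v > 0"
    have "\<alpha> \<bullet> x > 0" if x: "x \<in> C" for x
    proof (rule ccontr)
      assume "\<not> \<alpha> \<bullet> x > 0"
      hence "inner \<alpha> x \<le> 0" "0 \<le> inner \<alpha> v" using a by auto
      from connected_ivt_hyperplane[OF conn x vC this] obtain z where "z \<in> C" "\<alpha> \<bullet> z = 0" by blast
      thus False using sub a unfolding regular_set_def by auto
    qed
    thus "\<alpha> \<in> pos_roots \<Phi> C" using a unfolding pos_roots_def by auto
  qed
  thus ?thesis using that nz by blast
qed

theorem proposition1p5:
  fixes \<Phi> :: "'a::euclidean_space set" and s :: "'a \<Rightarrow> 'a" and C :: "'a set" and \<alpha> :: 'a
  assumes "root_system \<Phi>"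
    and "s \<in> invols \<Phi>"
    and "weyl_chamber \<Phi> C"
    and "S_chamber \<Phi> s C"
    and "\<alpha> \<in> B_star \<Phi> s C"
  shows "(\<exists>!\<alpha>'. \<alpha>' \<in> simple_roots \<Phi> C \<and> s \<alpha> - \<alpha>' \<in> int_comb (B_bullet \<Phi> s C)) \<and>
    (\<forall>\<alpha>'. \<alpha>' \<in> simple_roots \<Phi> C \<and> s \<alpha> - \<alpha>' \<in> int_comb (B_bullet \<Phi> s C) \<longrightarrow>
       (let \<alpha>'' = s \<alpha> - \<alpha>' in
          \<alpha>'' \<in> nonneg_int_comb (B_bullet \<Phi> s C) \<and> \<alpha> + \<alpha>'' \<in> \<Phi> \<and>
          (\<forall>\<gamma>\<in>nonneg_int_comb (B_bullet \<Phi> s C). \<alpha> + \<gamma> \<in> \<Phi> \<and> \<gamma> \<noteq> \<alpha>'' \<longrightarrow>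
             height \<Phi> C \<gamma> < height \<Phi> C \<alpha>'')))"
proof -
  obtain v where reg: "\<And>\<alpha>. \<alpha>\<in>\<Phi> \<Longrightarrow> \<alpha> \<bullet> v \<noteq> 0" and posC: "pos_roots \<Phi> C = {\<alpha>\<in>\<Phi>. \<alpha> \<bullet> v > 0}"
    using chamber_pos[OF assms(3)] by blast
  interpret R: RS \<Phi> v by unfold_locales (use assms(1) reg in auto)
  have PC: "pos_roots \<Phi> C = R.P" by (simp add: posC R.P_def)
  have BC: "simple_roots \<Phi> C = R.Bs" by (simp add: simple_roots_def PC R.Bs_def)
  from assms(2) have lin: "linear s" and inv: "\<And>x. s (s x) = x" and sPhi: "s ` \<Phi> = \<Phi>"
    by (auto simp: invols_def orthogonal_transformation_def)
  have sP: "\<And>x. x\<in>\<Phi> \<Longrightarrow> s x \<in> \<Phi>" using sPhi by auto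
  define B where "B = R.Bs"
  define Bb where "Bb = B_bullet \<Phi> s C"
  define N where "N = B - Bb"
  define r where "r = representation B"
  have BP: "B \<subseteq> R.P" unfolding B_def by (rule R.Bs_sub)
  have BPhi: "B \<subseteq> \<Phi>" using BP R.P_sub by auto
  have Bb_eq: "Bb = {\<beta>\<in>B. s \<beta> = -\<beta>}"
    unfolding Bb_def B_bullet_def BC B_def Phi_bullet_def using BPhi B_def by auto
  have finB: "finite B" unfolding B_def by (rule R.finB)
  have BbB: "Bb \<subseteq> B" using Bb_eq by auto
  have finN: "finite N" "finite Bb" using finite_subset[OF BbB finB] finB unfolding N_def by auto
  have aB: "\<alpha> \<in> B" "\<alpha> \<in> \<Phi>" "s \<alpha> \<noteq> \<alpha>" "s \<alpha> \<noteq> -\<alpha>"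
    using assms(5) unfolding B_star_def BC B_def Phi_star_def Phi_circ_def Phi_bullet_def by auto
  have aN: "\<alpha> \<in> N" using aB unfolding N_def Bb_eq by auto
  have sBb: "s y = -y" if "y \<in> span Bb" for y
  proof -
    from that obtain u where y: "y = (\<Sum>\<beta>\<in>Bb. u \<beta> *\<^sub>R \<beta>)" using span_finite[OF finN(2)] by blast
    have "s y = (\<Sum>\<beta>\<in>Bb. u \<beta> *\<^sub>R s \<beta>)" unfolding y by (simp add: linear_sum[OF lin] linear_scale[OF lin])
    also have "\<dots> = (\<Sum>\<beta>\<in>Bb. - (u \<beta> *\<^sub>R \<beta>))" by (intro sum.cong refl) (auto simp: Bb_eq)
    finally show ?thesis by (simp add: y sum_negf)
  qed
  have inBb: "y \<in> span Bb" if "\<And>\<gamma>. \<gamma> \<in> N \<Longrightarrow> r y \<gamma> = 0" for y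
  proof -
    have "y = (\<Sum>\<beta>\<in>B. r y \<beta> *\<^sub>R \<beta>)" unfolding r_def B_def by (simp add: R.rep_sum)
    also have "\<dots> \<in> span Bb"
    proof (rule span_sum)
      fix \<beta> assume "\<beta> \<in> B"
      show "r y \<beta> *\<^sub>R \<beta> \<in> span Bb"
      proof (cases "\<beta> \<in> Bb")
        case True thus ?thesis by (simp add: span_scale span_base)
      next
        case False thus ?thesis using that[of \<beta>] \<open>\<beta> \<in> B\<close> by (simp add: N_def span_zero)
      qed
    qed
    finally show ?thesis .
  qed
  have combBb: "(\<Sum>\<beta>\<in>T. c \<beta> *\<^sub>R \<beta>) \<in> span Bb" if "T \<subseteq> Bb" for T c
    using that by (intro span_sum span_scale) (auto intro: span_base)
  define x where "x = s \<alpha>"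
  have xP: "x \<in> R.P" using assms(4) aB BP
    unfolding S_chamber_def PC x_def Phi_star_def Phi_circ_def Phi_bullet_def by auto
  have sNP: "s \<beta> \<in> R.P" if "\<beta> \<in> N" for \<beta>
  proof (cases "s \<beta> = \<beta>")
    case True thus ?thesis using that BP unfolding N_def by auto
  next
    case False
    have "s \<beta> \<noteq> -\<beta>" using that unfolding N_def Bb_eq by auto
    thus ?thesis using False assms(4) that BP BPhi
      unfolding S_chamber_def PC N_def Phi_star_def Phi_circ_def Phi_bullet_def by auto
  qed
  obtain ck where ck: "\<And>\<beta>. r x \<beta> = real (ck \<beta>)" using R.rep_pos[OF xP] unfolding r_def B_def by blast
  have "\<forall>\<beta>\<in>N. \<exists>c::'a\<Rightarrow>nat. \<forall>\<gamma>. r (s \<beta>) \<gamma> = real (c \<gamma>)"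
    using R.rep_pos sNP unfolding r_def B_def by blast
  then obtain cs where cs: "\<And>\<beta> \<gamma>. \<beta> \<in> N \<Longrightarrow> r (s \<beta>) \<gamma> = real (cs \<beta> \<gamma>)" by metis
  define nb where "nb \<beta> = (\<Sum>\<gamma>\<in>N. r (s \<beta>) \<gamma>)" for \<beta>
  have nb_ge: "nb \<beta> \<ge> 1" if b: "\<beta> \<in> N" for \<beta>
  proof -
    have e: "nb \<beta> = real (\<Sum>\<gamma>\<in>N. cs \<beta> \<gamma>)" unfolding nb_def using cs[OF b] by simp
    have "(\<Sum>\<gamma>\<in>N. cs \<beta> \<gamma>) \<noteq> 0"
    proof
      assume "(\<Sum>\<gamma>\<in>N. cs \<beta> \<gamma>) = 0"
      hence "\<And>\<gamma>. \<gamma> \<in> N \<Longrightarrow> r (s \<beta>) \<gamma> = 0" using cs[OF b] finN by simp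
      hence "s (s \<beta>) = - s \<beta>" by (intro sBb inBb)
      hence "s \<beta> = -\<beta>" using inv by (metis minus_minus)
      thus False using b unfolding N_def Bb_eq by auto
    qed
    hence n1: "(\<Sum>\<gamma>\<in>N. cs \<beta> \<gamma>) \<ge> 1" by simp
    have "real (\<Sum>\<gamma>\<in>N. cs \<beta> \<gamma>) \<ge> 1" by (metis n1 of_nat_1 of_nat_le_iff)
    thus ?thesis using e by linarith
  qed
  have nb_Bb: "nb \<beta> = 0" if b: "\<beta> \<in> Bb" for \<beta>
  proof -
    have "s \<beta> = -\<beta>" "\<beta> \<in> B" using b Bb_eq by auto
    hence "r (s \<beta>) \<gamma> = 0" if "\<gamma> \<in> N" for \<gamma>
      using that b unfolding r_def B_def N_def by (auto simp: R.rep_lin R.rep_basis)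
    thus ?thesis unfolding nb_def by simp
  qed
  have aexp: "\<alpha> = (\<Sum>\<beta>\<in>B. r x \<beta> *\<^sub>R s \<beta>)"
  proof -
    have "\<alpha> = s x" unfolding x_def using inv by simp
    also have "x = (\<Sum>\<beta>\<in>B. r x \<beta> *\<^sub>R \<beta>)" unfolding r_def B_def by (simp add: R.rep_sum)
    finally show ?thesis by (simp add: linear_sum[OF lin] linear_scale[OF lin])
  qed
  have ra: "r \<alpha> \<gamma> = (\<Sum>\<beta>\<in>B. r x \<beta> * r (s \<beta>) \<gamma>)" for \<gamma>
    by (subst aexp) (simp add: r_def B_def R.rep_sumI R.rep_lin)
  have "(\<Sum>\<gamma>\<in>N. r \<alpha> \<gamma>) = 1"
    using aB aN finN unfolding r_def B_def by (simp add: R.rep_basis)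
  also have "(\<Sum>\<gamma>\<in>N. r \<alpha> \<gamma>) = (\<Sum>\<beta>\<in>B. r x \<beta> * nb \<beta>)"
    unfolding ra nb_def by (simp add: sum_distrib_left sum.swap[of _ N])
  also have "\<dots> = (\<Sum>\<beta>\<in>N. r x \<beta> * nb \<beta>)"
  proof -
    have "N \<subseteq> B" unfolding N_def by auto
    moreover have "\<forall>\<beta>\<in>B - N. r x \<beta> * nb \<beta> = 0" using nb_Bb unfolding N_def by auto
    ultimately show ?thesis using sum.mono_neutral_right[OF finB, of N "\<lambda>\<beta>. r x \<beta> * nb \<beta>"] by simp
  qed
  finally have s1: "(\<Sum>\<beta>\<in>N. r x \<beta> * nb \<beta>) = 1" .
  have "(\<Sum>\<beta>\<in>N. r x \<beta>) \<le> (\<Sum>\<beta>\<in>N. r x \<beta> * nb \<beta>)"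
  proof (rule sum_mono)
    fix \<beta> assume "\<beta> \<in> N"
    hence "r x \<beta> * 1 \<le> r x \<beta> * nb \<beta>" using nb_ge ck by (intro mult_left_mono) auto
    thus "r x \<beta> \<le> r x \<beta> * nb \<beta>" by simp
  qed
  hence sle: "(\<Sum>\<beta>\<in>N. r x \<beta>) \<le> 1" using s1 by simp
  obtain \<beta>0 where b0: "\<beta>0 \<in> N" "r x \<beta>0 \<noteq> 0"
  proof (rule ccontr)
    assume "\<not> thesis"
    hence "\<And>\<gamma>. \<gamma> \<in> N \<Longrightarrow> r x \<gamma> = 0" using that by blast
    hence "s x = -x" by (intro sBb inBb)
    hence "s \<alpha> = -\<alpha>" unfolding x_def using inv by (metis minus_minus)
    thus False using aB by simp
  qed
  have "r x \<beta>0 \<ge> 1" using b0(2) ck[of \<beta>0] by simp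
  moreover have "(\<Sum>\<beta>\<in>N. r x \<beta>) = r x \<beta>0 + (\<Sum>\<beta>\<in>N - {\<beta>0}. r x \<beta>)"
    using b0 finN by (simp add: sum.remove)
  moreover have "(\<Sum>\<beta>\<in>N - {\<beta>0}. r x \<beta>) \<ge> 0" using ck by (simp add: sum_nonneg)
  ultimately have rb0: "r x \<beta>0 = 1" and rest: "(\<Sum>\<beta>\<in>N - {\<beta>0}. r x \<beta>) = 0" using sle by linarith+
  have kN: "r x \<beta> = (if \<beta> = \<beta>0 then 1 else 0)" if "\<beta> \<in> N" for \<beta>
  proof (cases "\<beta> = \<beta>0")
    case True thus ?thesis using rb0 by simp
  next
    case False
    have "\<forall>\<beta>\<in>N - {\<beta>0}. r x \<beta> = 0" using rest finN ck by (subst (asm) sum_nonneg_eq_0_iff) auto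
    thus ?thesis using False that by auto
  qed
  have b0B: "\<beta>0 \<in> B" "\<beta>0 \<notin> Bb" using b0 unfolding N_def by auto
  define a2 where "a2 = x - \<beta>0"
  have ra2: "r a2 \<beta> = r x \<beta> - (if \<beta> = \<beta>0 then 1 else 0)" for \<beta>
    unfolding a2_def r_def B_def using b0B by (simp add: R.rep_lin R.rep_basis B_def)
  have a2c: "a2 = (\<Sum>\<beta>\<in>Bb. real (ck \<beta>) *\<^sub>R \<beta>)"
  proof (rule R.rep_inj)
    fix \<beta> assume "\<beta> \<in> R.Bs"
    hence b: "\<beta> \<in> B" by (simp add: B_def)
    have "representation R.Bs (\<Sum>\<beta>\<in>Bb. real (ck \<beta>) *\<^sub>R \<beta>) \<beta> = (if \<beta> \<in> Bb then real (ck \<beta>) else 0)"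
      using BbB by (simp add: R.rep_comb B_def)
    moreover have "r a2 \<beta> = (if \<beta> \<in> Bb then real (ck \<beta>) else 0)"
    proof (cases "\<beta> \<in> Bb")
      case True thus ?thesis using ra2 ck b0B by auto
    next
      case False hence "\<beta> \<in> N" using b N_def by auto
      thus ?thesis using ra2 kN False by auto
    qed
    ultimately show "representation R.Bs a2 \<beta> = representation R.Bs (\<Sum>\<beta>\<in>Bb. real (ck \<beta>) *\<^sub>R \<beta>) \<beta>"
      unfolding r_def B_def by simp
  qed
  have a2nn: "a2 \<in> nonneg_int_comb Bb" unfolding nonneg_int_comb_def using a2c finN(2) by blast
  have a2int: "a2 \<in> int_comb Bb" unfolding int_comb_def
    by (rule CollectI, rule exI[of _ Bb], rule exI[of _ "\<lambda>\<beta>. int (ck \<beta>)"]) (simp add: a2c finN(2))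
  have sa2: "s a2 = -a2" using a2c combBb sBb by auto
  have uniq: "\<alpha>1 = \<beta>0" if u1: "\<alpha>1 \<in> B" and u2: "x - \<alpha>1 \<in> int_comb Bb" for \<alpha>1
  proof -
    obtain T c where T: "T \<subseteq> Bb" "x - \<alpha>1 = (\<Sum>\<beta>\<in>T. real_of_int (c \<beta>) *\<^sub>R \<beta>)"
      using u2 unfolding int_comb_def by blast
    have "r (x - \<alpha>1) \<beta>0 = 0" unfolding T(2) r_def B_def using T(1) BbB b0B
      by (subst R.rep_comb) (auto simp: B_def)
    hence "r \<alpha>1 \<beta>0 = 1" using rb0 unfolding r_def B_def by (simp add: R.rep_lin)
    thus ?thesis using u1 unfolding r_def B_def by (simp add: R.rep_basis split: if_splits)
  qed
  have all: "\<alpha>1 \<in> simple_roots \<Phi> C \<and> s \<alpha> - \<alpha>1 \<in> int_comb (B_bullet \<Phi> s C) \<longleftrightarrow> \<alpha>1 = \<beta>0" for \<alpha>1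
    using uniq[of \<alpha>1] b0B a2int unfolding BC B_def[symmetric] Bb_def[symmetric] x_def[symmetric] a2_def by auto
  have root2: "\<alpha> + a2 \<in> \<Phi>"
  proof -
    have "s (\<alpha> + a2) = \<beta>0" using sa2 unfolding a2_def x_def by (simp add: linear_add[OF lin])
    hence "\<alpha> + a2 = s \<beta>0" using inv by metis
    thus ?thesis using sP b0B BPhi by auto
  qed
  have hgt: "height \<Phi> C \<xi> = (\<Sum>\<beta>\<in>B. r \<xi> \<beta>)" for \<xi> unfolding height_def BC B_def r_def ..
  have maxh: "height \<Phi> C \<gamma> < height \<Phi> C a2"
    if g: "\<gamma> \<in> nonneg_int_comb Bb" "\<alpha> + \<gamma> \<in> \<Phi>" "\<gamma> \<noteq> a2" for \<gamma>
  proof -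
    obtain T c where T: "T \<subseteq> Bb" "\<gamma> = (\<Sum>\<beta>\<in>T. real (c \<beta> :: nat) *\<^sub>R \<beta>)"
      using g(1) unfolding nonneg_int_comb_def by blast
    have sg: "s \<gamma> = -\<gamma>" using T combBb sBb by auto
    have z: "s (\<alpha> + \<gamma>) = x - \<gamma>" using sg unfolding x_def by (simp add: linear_add[OF lin])
    have zP: "x - \<gamma> \<in> \<Phi>" using sP[OF g(2)] z by simp
    have rg0: "r \<gamma> \<beta>0 = 0" unfolding T(2) r_def B_def using T(1) BbB b0B
      by (subst R.rep_comb) (auto simp: B_def)
    have "r (x - \<gamma>) \<beta>0 > 0" using rg0 rb0 unfolding r_def B_def by (simp add: R.rep_lin)
    hence "x - \<gamma> \<in> R.P" using R.rep_posI zP unfolding r_def B_def by blast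
    hence nn: "r (x - \<gamma>) \<beta> \<ge> 0" for \<beta> using R.rep_pos_ge unfolding r_def B_def by blast
    have le: "\<forall>\<beta>\<in>B. r \<gamma> \<beta> \<le> r a2 \<beta>"
    proof
      fix \<beta> assume "\<beta> \<in> B"
      show "r \<gamma> \<beta> \<le> r a2 \<beta>"
      proof (cases "\<beta> = \<beta>0")
        case True thus ?thesis using ra2 rg0 rb0 by simp
      next
        case False thus ?thesis using ra2 nn[of \<beta>] unfolding r_def B_def by (simp add: R.rep_lin)
      qed
    qed
    have "\<exists>\<beta>\<in>B. r \<gamma> \<beta> < r a2 \<beta>"
    proof (rule ccontr)
      assume "\<not> ?thesis"
      hence "\<And>\<beta>. \<beta> \<in> R.Bs \<Longrightarrow> representation R.Bs \<gamma> \<beta> = representation R.Bs a2 \<beta>"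
        using le unfolding r_def B_def by force
      hence "\<gamma> = a2" by (rule R.rep_inj)
      thus False using g(3) by simp
    qed
    thus ?thesis unfolding hgt using le finB by (intro sum_strict_mono_ex1) auto
  qed
  show ?thesis
  proof
    show "\<exists>!\<alpha>'. \<alpha>' \<in> simple_roots \<Phi> C \<and> s \<alpha> - \<alpha>' \<in> int_comb (B_bullet \<Phi> s C)"
    proof (rule ex1I[of _ \<beta>0])
      show "\<beta>0 \<in> simple_roots \<Phi> C \<and> s \<alpha> - \<beta>0 \<in> int_comb (B_bullet \<Phi> s C)" using all[of \<beta>0] by simp
    next
      fix y assume "y \<in> simple_roots \<Phi> C \<and> s \<alpha> - y \<in> int_comb (B_bullet \<Phi> s C)"
      thus "y = \<beta>0" using all[of y] by simp
    qed
  next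
    show "\<forall>\<alpha>'. \<alpha>' \<in> simple_roots \<Phi> C \<and> s \<alpha> - \<alpha>' \<in> int_comb (B_bullet \<Phi> s C) \<longrightarrow>
       (let \<alpha>'' = s \<alpha> - \<alpha>' in
          \<alpha>'' \<in> nonneg_int_comb (B_bullet \<Phi> s C) \<and> \<alpha> + \<alpha>'' \<in> \<Phi> \<and>
          (\<forall>\<gamma>\<in>nonneg_int_comb (B_bullet \<Phi> s C). \<alpha> + \<gamma> \<in> \<Phi> \<and> \<gamma> \<noteq> \<alpha>'' \<longrightarrow>
             height \<Phi> C \<gamma> < height \<Phi> C \<alpha>''))"
    proof (intro allI impI)
      fix \<alpha>1 assume "\<alpha>1 \<in> simple_roots \<Phi> C \<and> s \<alpha> - \<alpha>1 \<in> int_comb (B_bullet \<Phi> s C)"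
      hence "\<alpha>1 = \<beta>0" using all[of \<alpha>1] by blast
      hence e: "s \<alpha> - \<alpha>1 = a2" unfolding a2_def x_def by simp
      show "let \<alpha>'' = s \<alpha> - \<alpha>1 in
          \<alpha>'' \<in> nonneg_int_comb (B_bullet \<Phi> s C) \<and> \<alpha> + \<alpha>'' \<in> \<Phi> \<and>
          (\<forall>\<gamma>\<in>nonneg_int_comb (B_bullet \<Phi> s C). \<alpha> + \<gamma> \<in> \<Phi> \<and> \<gamma> \<noteq> \<alpha>'' \<longrightarrow>
             height \<Phi> C \<gamma> < height \<Phi> C \<alpha>'')"
        unfolding Let_def e Bb_def[symmetric]
      proof (intro conjI ballI impI)
        fix \<gamma> assume "\<gamma> \<in> nonneg_int_comb Bb" "\<alpha> + \<gamma> \<in> \<Phi> \<and> \<gamma> \<noteq> a2"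
        thus "height \<Phi> C \<gamma> < height \<Phi> C a2" using maxh by blast
      qed (rule a2nn, rule root2)
    qed
  qed
qed

end
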